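(* Let $\Gamma=(G,\sigma)$ be a signed graph with $G=(V,E)$, $|V|=n$, with edge weight $w\equiv1$, vertex measure $\mu\equiv1$ and potential $\kappa\equiv0$. Then $(L_1(\Gamma),\dots,L_n(\Gamma))=(0,\dots,0)$ if and only if $E=\emptyset$.
   Context: $G=(V,E)$ is a finite undirected graph without self-loops, $V=\{1,\dots,n\}$; $\sigma:E\to\{\pm1\}$, $\sigma_{ij}=\sigma(\{i,j\})$. For $p\ge1$ and nonzero $f$, $\mathcal R_p^\sigma(f)=\frac{\sum_{\{i,j\}\in E}|f(i)-\sigma_{ij}f(j)|^p}{\sum_i|f(i)|^p}$; $\mathcal S_p=\{f:\sum_i|f(i)|^p=1\}$; Krasnoselskii genus $\gamma(B)$ of closed symmetric $B\subset\mathbb R^n\setminus\{0\}$: least $k$ with an odd continuous map $B\to\mathbb R^k\setminus\{0\}$; $\mathcal F_k(\mathcal S_p)$ = closed symmetric $B\subset\mathcal S_p$ with $\gamma(B)\ge k$; $\lambda_k^{(p)}=\min_{B\in\mathcal F_k(\mathcal S_p)}\max_{f\in B}\mathcal R_p^\sigma(f)$. Cut-off adjacency eigenvalues: $L_k(\Gamma):=\lim_{p\to\infty}2^{-p}\lambda_k^{(p)}(\Gamma)$ (the limits exist). *)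

theory Defs
  imports "HOL-Analysis.Analysis"
begin

text \<open>Vertices are the elements of a finite type 'n (so n = CARD('n)); a function
  f : V -> R is a vector in real^'n.\<close>

definition signed_graph :: "'n::finite set set \<Rightarrow> ('n set \<Rightarrow> real) \<Rightarrow> bool" where
  "signed_graph E \<sigma> \<longleftrightarrow> (\<forall>e\<in>E. \<exists>i j. i \<noteq> j \<and> e = {i, j}) \<and> (\<forall>e\<in>E. \<sigma> e = 1 \<or> \<sigma> e = -1)"

text \<open>Numerator: sum over edges {i,j} of |f(i) - sigma_ij f(j)|^p.  Each unordered edge
  is visited twice as an ordered pair (with identical term, since sigma = +-1),
  hence the factor 1/2.\<close>
definition edge_energy :: "'n::finite set set \<Rightarrow> ('n set \<Rightarrow> real) \<Rightarrow> real \<Rightarrow> real^'n \<Rightarrow> real" where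
  "edge_energy E \<sigma> p f =
     (1/2) * (\<Sum>i\<in>UNIV. \<Sum>j\<in>UNIV. if {i, j} \<in> E then \<bar>f$i - \<sigma> {i, j} * f$j\<bar> powr p else 0)"

definition pnorm_p :: "real \<Rightarrow> real^'n::finite \<Rightarrow> real" where
  "pnorm_p p f = (\<Sum>i\<in>UNIV. \<bar>f$i\<bar> powr p)"

definition rayleigh :: "'n::finite set set \<Rightarrow> ('n set \<Rightarrow> real) \<Rightarrow> real \<Rightarrow> real^'n \<Rightarrow> real" where
  "rayleigh E \<sigma> p f = edge_energy E \<sigma> p f / pnorm_p p f"

definition sphere_p :: "real \<Rightarrow> (real^'n::finite) set" where
  "sphere_p p = {f. pnorm_p p f = 1}"

text \<open>Odd continuous map B -> R^k \ {0}, with R^k represented by its k coordinate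
  functions (indices 0..k-1).\<close>
definition odd_map_to :: "(real^'n::finite) set \<Rightarrow> nat \<Rightarrow> bool" where
  "odd_map_to B k \<longleftrightarrow> (\<exists>g :: real^'n \<Rightarrow> nat \<Rightarrow> real.
       (\<forall>i<k. continuous_on B (\<lambda>x. g x i)) \<and>
       (\<forall>x\<in>B. \<forall>i<k. g (-x) i = - g x i) \<and>
       (\<forall>x\<in>B. \<exists>i<k. g x i \<noteq> 0))"

definition genus :: "(real^'n::finite) set \<Rightarrow> nat" where
  "genus B = (LEAST k. odd_map_to B k)"

definition symmetric_set :: "(real^'n::finite) set \<Rightarrow> bool" where
  "symmetric_set B \<longleftrightarrow> (\<forall>x\<in>B. -x \<in> B)"

definition genus_family :: "real \<Rightarrow> nat \<Rightarrow> (real^'n::finite) set set" where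
  "genus_family p k = {B. B \<subseteq> sphere_p p \<and> closed B \<and> symmetric_set B \<and> genus B \<ge> k}"

text \<open>Min-max eigenvalue; min/max written as Inf/Sup (they are attained).\<close>
definition p_eigenvalue :: "'n::finite set set \<Rightarrow> ('n set \<Rightarrow> real) \<Rightarrow> real \<Rightarrow> nat \<Rightarrow> real" where
  "p_eigenvalue E \<sigma> p k =
     (INF B \<in> (genus_family p k :: (real^'n) set set). SUP f \<in> B. rayleigh E \<sigma> p f)"

end

theory Submission
  imports Defs "HOL-Homology.Homology"
begin

definition Sph :: "nat \<Rightarrow> (nat \<Rightarrow> real) set" where
  "Sph k = {x. (\<Sum>i\<le>k. (x i)\<^sup>2) = 1 \<and> (\<forall>i>k. x i = 0)}"

lemma nsphere_eq: "nsphere k = top_of_set (Sph k)"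
  unfolding nsphere Sph_def euclidean_product_topology ..

lemma topspace_nsphere_eq [simp]: "topspace (nsphere k) = Sph k"
  by (simp add: nsphere_eq)

lemma cm_nsphere_iff: "continuous_map (nsphere k) (nsphere k) f \<longleftrightarrow> continuous_on (Sph k) f \<and> f \<in> Sph k \<rightarrow> Sph k"
  by (simp add: nsphere_eq)

lemma cont_coord [continuous_intros]: "continuous_on S (\<lambda>x::nat\<Rightarrow>real. x i)"
  by (rule continuous_on_subset[OF continuous_on_product_coordinates]) simp

lemma Sph_sub: "Sph m \<subseteq> Sph (Suc m)"
  by (auto simp: Sph_def)

lemma Sph_Suc_eq: "x \<in> Sph (Suc m) \<Longrightarrow> x (Suc m) = 0 \<Longrightarrow> x \<in> Sph m"
  by (auto simp: Sph_def) (metis Suc_lessI)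

lemma homotopic_nsphere_iff:
  "homotopic_with (\<lambda>x. True) (nsphere k) (nsphere k) f g \<longleftrightarrow>
    (\<exists>h. continuous_on ({0..1::real} \<times> Sph k) h \<and> h \<in> ({0..1} \<times> Sph k) \<rightarrow> Sph k \<and>
       (\<forall>x\<in>Sph k. h (0, x) = f x) \<and> (\<forall>x\<in>Sph k. h (1, x) = g x))"
  by (simp add: homotopic_with nsphere_eq flip: subtopology_Times)

definition ip :: "nat \<Rightarrow> (nat \<Rightarrow> real) \<Rightarrow> (nat \<Rightarrow> real) \<Rightarrow> real" where
  "ip k x y = (\<Sum>i\<le>k. x i * y i)"

definition hh :: "nat \<Rightarrow> (nat \<Rightarrow> real) \<Rightarrow> (nat \<Rightarrow> real) \<Rightarrow> (nat \<Rightarrow> real)" where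
  "hh k u x = (\<lambda>i. x i - 2 * ip k u x / ip k u u * u i)"

lemma ip_lin2: "ip k y (\<lambda>i. x i - c * u i) = ip k y x - c * ip k y u"
  by (simp add: ip_def algebra_simps sum_subtractf sum_distrib_left)

lemma ip_lin1: "ip k (\<lambda>i. x i - c * u i) y = ip k x y - c * ip k u y"
  by (simp add: ip_def algebra_simps sum_subtractf sum_distrib_left)

lemma ip_sym: "ip k x y = ip k y x"
  by (simp add: ip_def mult.commute)

lemma ip_hh: "ip k u (hh k u x) = (if ip k u u = 0 then ip k u x else - ip k u x)"
proof -
  have "ip k u (hh k u x) = ip k u x - 2 * ip k u x / ip k u u * ip k u u"
    unfolding hh_def ip_lin2 ..
  then show ?thesis by auto
qed

lemma hh_eq: "hh k u x = (\<lambda>i. x i - (2 * ip k u x / ip k u u) * u i)"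
  by (simp add: hh_def)

lemma hh_hh: "hh k u (hh k u x) = x"
proof (cases "ip k u u = 0")
  case True
  then show ?thesis by (simp add: hh_def)
next
  case False
  define c where "c = 2 * ip k u x / ip k u u"
  have h1: "hh k u x = (\<lambda>i. x i - c * u i)" by (simp add: hh_eq c_def)
  have "ip k u (hh k u x) = - ip k u x" using False by (simp add: ip_hh)
  then have "2 * ip k u (hh k u x) / ip k u u = - c" by (simp add: c_def)
  then have "hh k u (hh k u x) = (\<lambda>i. hh k u x i - (- c) * u i)"
    by (simp only: hh_eq[of k u "hh k u x"])
  also have "\<dots> = x" by (simp add: h1)
  finally show ?thesis .
qed

lemma ip_self_hh: "ip k (hh k u x) (hh k u x) = ip k x x"
proof (cases "ip k u u = 0")
  case True
  then show ?thesis by (simp add: hh_def)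
next
  case False
  define a where "a = ip k u x"
  define b where "b = ip k u u"
  define c where "c = 2 * a / b"
  have h: "hh k u x = (\<lambda>i. x i - c * u i)" by (simp add: hh_eq c_def a_def b_def)
  have cb: "c * b = 2 * a" using False by (simp add: c_def b_def)
  have xu: "ip k x u = a" by (simp add: a_def ip_sym)
  have "ip k (hh k u x) (hh k u x) = ip k x x - c * ip k u x - c * (ip k x u - c * ip k u u)"
    unfolding h ip_lin1 ip_lin2 by (simp only: xu ip_sym[of k u x])
  also have "\<dots> = ip k x x - c * a - c * (a - c * b)"
    by (simp only: xu flip: a_def b_def)
  also have "\<dots> = ip k x x - 2 * c * a + c * (c * b)"
    by (simp add: algebra_simps)
  also have "\<dots> = ip k x x" unfolding cb by simp
  finally show ?thesis .
qed

lemma hh_neg: "hh k u (\<lambda>i. - x i) = (\<lambda>i. - hh k u x i)"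
  by (simp add: hh_def ip_def sum_negf)

lemma Sph_ip: "x \<in> Sph k \<longleftrightarrow> ip k x x = 1 \<and> (\<forall>i>k. x i = 0)"
  by (simp add: Sph_def ip_def power2_eq_square)

lemma hh_Sph: assumes "\<forall>i>k. u i = 0" "x \<in> Sph k" shows "hh k u x \<in> Sph k"
  using assms by (auto simp: Sph_ip ip_self_hh) (simp add: hh_def)

lemma cont_hh: "continuous_on S (hh k u)"
proof -
  have "hh k u = (\<lambda>x i. x i - (\<Sum>j\<le>k. u j * x j) * (2 * u i / ip k u u))"
    by (auto simp: hh_def ip_def fun_eq_iff)
  then show ?thesis
    by (simp only:) (intro continuous_on_coordinatewise_then_product continuous_intros)
qed

lemma householder:
  assumes v: "v \<in> Sph k"
  obtains H where "continuous_map (nsphere k) (nsphere k) H"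
    "homeomorphic_map (nsphere k) (nsphere k) H"
    "\<And>x. H (\<lambda>i. - x i) = (\<lambda>i. - H x i)"
    "\<And>x. H x = (\<lambda>i. if i = k then 1 else 0) \<Longrightarrow> x = v"
proof -
  define e where "e = (\<lambda>i::nat. if i = k then (1::real) else 0)"
  define u where "u = (\<lambda>i. v i - e i)"
  have u0: "\<forall>i>k. u i = 0" using v by (auto simp: u_def e_def Sph_def)
  have cm: "continuous_map (nsphere k) (nsphere k) (hh k u)"
    by (auto simp: cm_nsphere_iff cont_hh hh_Sph u0)
  have vv: "ip k v v = 1" using v by (simp add: Sph_ip)
  have ipe: "ip k e y = y k" for y
  proof -
    have "(\<Sum>i\<le>k. e i * y i) = (\<Sum>i\<le>k. if i = k then y i else 0)"
      by (rule sum.cong) (auto simp: e_def)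
    then show ?thesis by (simp add: ip_def)
  qed
  have ipe': "ip k y e = y k" for y using ipe ip_sym by metis
  have "ip k u v = ip k v v - ip k e v"
    by (simp add: u_def ip_def algebra_simps sum_subtractf)
  then have uv: "ip k u v = 1 - v k"
    using vv ipe[of v] by simp
  have uu: "ip k u u = 2 - 2 * v k"
  proof -
    have u': "u = (\<lambda>i. v i - 1 * e i)" by (simp add: u_def)
    have "ip k u u = ip k v v - ip k v e - (ip k e v - ip k e e)"
      unfolding u' ip_lin1 ip_lin2 by simp
    then show ?thesis using vv ipe[of v] ipe'[of v] ipe[of e] by (simp add: e_def)
  qed
  have hv: "hh k u v = e"
  proof (cases "v k = 1")
    case True
    then have "ip k u u = 0" using uu by simp
    moreover have "v = e"
    proof -
      have "(\<Sum>i\<le>k. (u i)\<^sup>2) = 0" using \<open>ip k u u = 0\<close> by (simp add: ip_def power2_eq_square)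
      then have "\<forall>i\<le>k. u i = 0"
        by (subst (asm) sum_nonneg_eq_0_iff) auto
      then have "v i = e i" for i using u0 by (cases "i \<le> k") (auto simp: u_def)
      then show ?thesis by auto
    qed
    ultimately show ?thesis by (simp add: hh_def)
  next
    case False
    then have "ip k u u = 2 * ip k u v" "ip k u u \<noteq> 0" using uv uu by auto
    then have "2 * ip k u v / ip k u u = 1" by simp
    then have "hh k u v = (\<lambda>i. v i - u i)"
      unfolding hh_def by (simp only: mult_1)
    then show ?thesis by (simp add: u_def)
  qed
  show thesis
  proof
    show "continuous_map (nsphere k) (nsphere k) (hh k u)" by (fact cm)
    show "homeomorphic_map (nsphere k) (nsphere k) (hh k u)"
    proof -
      have "homeomorphic_maps (nsphere k) (nsphere k) (hh k u) (hh k u)"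
        unfolding homeomorphic_maps_def using cm by (simp add: hh_hh)
      then show ?thesis unfolding homeomorphic_map_maps by blast
    qed
    show "hh k u (\<lambda>i. - x i) = (\<lambda>i. - hh k u x i)" for x by (fact hh_neg)
    show "x = v" if "hh k u x = (\<lambda>i. if i = k then 1 else 0)" for x
    proof -
      have "hh k u x = e" using that by (simp add: e_def)
      have "x = hh k u (hh k u x)" by (simp only: hh_hh)
      also have "\<dots> = hh k u e" by (simp only: \<open>hh k u x = e\<close>)
      also have "\<dots> = hh k u (hh k u v)" by (simp only: hv)
      also have "\<dots> = v" by (simp only: hh_hh)
      finally show ?thesis .
    qed
  qed
qed

lemma cont_comp_snd:
  assumes "continuous_on S f"
  shows "continuous_on (A \<times> S) (\<lambda>z. (f (snd z) :: nat \<Rightarrow> real) i)"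
proof -
  have "continuous_on S (\<lambda>x. f x i)" using assms by (rule continuous_on_product_then_coordinatewise)
  then show ?thesis
    by (rule continuous_on_compose2[OF _ continuous_on_snd]) auto
qed

lemma squash:
  assumes cm: "continuous_map (nsphere (Suc m)) (nsphere (Suc m)) f"
    and odd: "\<And>x. x \<in> Sph (Suc m) \<Longrightarrow> f (\<lambda>i. - x i) = (\<lambda>i. - f x i)"
    and np: "\<And>x. x \<in> Sph m \<Longrightarrow> 0 < (\<Sum>i\<le>m. (f x i)\<^sup>2)"
  obtains g where "continuous_map (nsphere (Suc m)) (nsphere (Suc m)) g"
    "\<And>x. x \<in> Sph (Suc m) \<Longrightarrow> g (\<lambda>i. - x i) = (\<lambda>i. - g x i)"
    "homotopic_with (\<lambda>x. True) (nsphere (Suc m)) (nsphere (Suc m)) f g"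
    "g \<in> Sph m \<rightarrow> Sph m"
proof -
  let ?k = "Suc m"
  have contf: "continuous_on (Sph ?k) f" and fS: "\<And>x. x \<in> Sph ?k \<Longrightarrow> f x \<in> Sph ?k"
    using cm by (auto simp: cm_nsphere_iff)
  define q where "q x = (\<Sum>i\<le>m. (f x i)\<^sup>2)" for x
  define t where "t x = q x / (q x + (x ?k)\<^sup>2)" for x :: "nat \<Rightarrow> real"
  define w where "w z = (\<lambda>i. if i = ?k then (1 - fst z * t (snd z)) * f (snd z) i else f (snd z) i)"
    for z :: "real \<times> (nat \<Rightarrow> real)"
  define N where "N z = sqrt (\<Sum>i\<le>?k. (w z i)\<^sup>2)" for z
  define h where "h z = (\<lambda>i. w z i / N z)" for z
  have fk: "q x + (f x ?k)\<^sup>2 = 1" if "x \<in> Sph ?k" for x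
    using fS[OF that] by (simp add: Sph_def q_def)
  have f0: "f x i = 0" if "x \<in> Sph ?k" "i > ?k" for x i using fS[OF that(1)] that(2) by (auto simp: Sph_def)
  have q0: "q x \<ge> 0" for x by (simp add: q_def sum_nonneg)
  have den: "q x + (x ?k)\<^sup>2 > 0" if "x \<in> Sph ?k" for x
  proof (cases "x ?k = 0")
    case True then have "x \<in> Sph m" using Sph_Suc_eq that by blast
    then show ?thesis using np[of x] True by (simp add: q_def)
  next
    case False then show ?thesis using q0[of x] by (simp add: add_nonneg_pos)
  qed
  have t01: "0 \<le> t x \<and> t x \<le> 1" if "x \<in> Sph ?k" for x
    using den[OF that] q0[of x] by (simp add: t_def divide_le_eq_1)
  have wlow: "(\<Sum>i\<le>m. (w z i)\<^sup>2) = q (snd z)" for z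
    unfolding q_def by (rule sum.cong) (auto simp: w_def)
  have Nsq: "(\<Sum>i\<le>?k. (w z i)\<^sup>2) = q (snd z) + ((1 - fst z * t (snd z)) * f (snd z) ?k)\<^sup>2" for z
    using wlow[of z] by (simp add: w_def)
  have Npos: "(\<Sum>i\<le>?k. (w z i)\<^sup>2) > 0" if "snd z \<in> Sph ?k" for z
  proof (cases "q (snd z) > 0")
    case True then show ?thesis unfolding Nsq by (simp add: add_pos_nonneg)
  next
    case False
    then have "q (snd z) = 0" using q0 by (simp add: not_less order_antisym)
    then have "t (snd z) = 0" "(f (snd z) ?k)\<^sup>2 = 1" using fk[OF that] by (auto simp: t_def)
    then show ?thesis unfolding Nsq by (simp add: \<open>q (snd z) = 0\<close>)
  qed
  have Nne: "N z \<noteq> 0" if "snd z \<in> Sph ?k" for z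
    using Npos[OF that] by (simp add: N_def)
  have hS: "h z \<in> Sph ?k" if "snd z \<in> Sph ?k" for z
  proof -
    have "(N z)\<^sup>2 = (\<Sum>i\<le>?k. (w z i)\<^sup>2)" using Npos[OF that] by (simp add: N_def)
    then have "(\<Sum>i\<le>?k. (h z i)\<^sup>2) = 1"
      using Npos[OF that] by (simp add: h_def power_divide flip: sum_divide_distrib)
    moreover have "h z i = 0" if "i > ?k" for i
      using f0[OF \<open>snd z \<in> Sph ?k\<close> that] that by (simp add: h_def w_def)
    ultimately show ?thesis by (simp add: Sph_def)
  qed
  have h0: "h (0, x) = f x" if "x \<in> Sph ?k" for x
  proof -
    have w0: "w (0, x) = f x" by (simp add: w_def fun_eq_iff)
    have "(\<Sum>i\<le>?k. (f x i)\<^sup>2) = 1" using fS[OF that] by (simp add: Sph_def)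
    then show ?thesis by (simp add: h_def N_def w0)
  qed
  have hodd: "h (s, \<lambda>i. - x i) = (\<lambda>i. - h (s, x) i)" if "x \<in> Sph ?k" for s x
  proof -
    have fo: "f (\<lambda>i. - x i) = (\<lambda>i. - f x i)" using odd[OF that] .
    have "q (\<lambda>i. - x i) = q x" by (simp add: q_def fo)
    then have "t (\<lambda>i. - x i) = t x" by (simp add: t_def)
    then have "w (s, \<lambda>i. - x i) = (\<lambda>i. - w (s, x) i)" by (simp add: w_def fo fun_eq_iff)
    then have "N (s, \<lambda>i. - x i) = N (s, x)" "w (s, \<lambda>i. - x i) = (\<lambda>i. - w (s, x) i)"
      by (simp_all add: N_def)
    then show ?thesis by (simp add: h_def fun_eq_iff)
  qed
  have heq: "h (1, x) \<in> Sph m" if "x \<in> Sph m" for x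
  proof -
    have xk: "x \<in> Sph ?k" using that Sph_sub by blast
    have "x ?k = 0" using that by (simp add: Sph_def)
    moreover have "q x > 0" using np[OF that] by (simp add: q_def)
    ultimately have "t x = 1" by (simp add: t_def)
    then have "h (1, x) ?k = 0" by (simp add: h_def w_def)
    then show ?thesis using hS[of "(1, x)"] xk Sph_Suc_eq by auto
  qed
  have conth: "continuous_on ({0..1} \<times> Sph ?k) h"
  proof -
    let ?D = "{0..1::real} \<times> Sph ?k"
    have cf: "continuous_on ?D (\<lambda>z. f (snd z) i)" for i
      by (rule cont_comp_snd[OF contf])
    have cq: "continuous_on ?D (\<lambda>z. q (snd z))"
      unfolding q_def by (intro continuous_intros cf)
    have ct: "continuous_on ?D (\<lambda>z. t (snd z))"
      unfolding t_def
    proof (intro continuous_intros cq)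
      show "continuous_on ?D (\<lambda>z. snd z ?k)"
        by (rule continuous_on_compose2[OF cont_coord continuous_on_snd]) auto
      show "\<forall>z\<in>?D. q (snd z) + (snd z ?k)\<^sup>2 \<noteq> 0" using den by fastforce
    qed
    have cw: "continuous_on ?D (\<lambda>z. w z i)" for i
      by (cases "i = ?k") (simp_all add: w_def, (intro continuous_intros cf ct)+)
    have cN: "continuous_on ?D N"
      unfolding N_def by (intro continuous_intros cw)
    show ?thesis
      unfolding h_def
    proof (intro continuous_on_coordinatewise_then_product continuous_on_divide cw cN ballI)
      show "N z \<noteq> 0" if "z \<in> ?D" for z using that Nne by auto
    qed
  qed
  have hom: "homotopic_with (\<lambda>x. True) (nsphere ?k) (nsphere ?k) f (\<lambda>x. h (1, x))"
    unfolding homotopic_nsphere_iff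
    by (rule exI[of _ h]) (auto simp: conth hS h0)
  show thesis
  proof
    show "homotopic_with (\<lambda>x. True) (nsphere ?k) (nsphere ?k) f (\<lambda>x. h (1, x))" by (fact hom)
    then show "continuous_map (nsphere ?k) (nsphere ?k) (\<lambda>x. h (1, x))"
      using homotopic_with_imp_continuous_maps by blast
    show "(\<lambda>x. h (1, x)) \<in> Sph m \<rightarrow> Sph m" using heq by auto
    show "h (1, \<lambda>i. - x i) = (\<lambda>i. - h (1, x) i)" if "x \<in> Sph ?k" for x using hodd[OF that] .
  qed
qed

definition enum_n :: "nat \<Rightarrow> 'n::finite" where
  "enum_n = (SOME h. bij_betw h {..<CARD('n)} UNIV)"

lemma bij_enum: "bij_betw (enum_n :: nat \<Rightarrow> 'n::finite) {..<CARD('n)} UNIV"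
proof -
  have "\<exists>h. bij_betw (h :: nat \<Rightarrow> 'n) {..<CARD('n)} UNIV"
    using ex_bij_betw_nat_finite[of "UNIV :: 'n set"] by (simp add: atLeast0LessThan)
  then show ?thesis unfolding enum_n_def by (rule someI_ex)
qed

definition inv_enum :: "'n::finite \<Rightarrow> nat" where
  "inv_enum = inv_into {..<CARD('n)} enum_n"

lemma inv_enum_lt: "inv_enum (j :: 'n::finite) < CARD('n)"
  using bij_enum[where 'n='n] unfolding inv_enum_def
  by (metis bij_betw_def inv_into_into lessThan_iff UNIV_I)

lemma enum_inv [simp]: "enum_n (inv_enum (j :: 'n::finite)) = j"
  using bij_enum[where 'n='n] unfolding inv_enum_def
  by (meson bij_betw_inv_into_right UNIV_I)

lemma inv_enum [simp]: "i < CARD('n) \<Longrightarrow> inv_enum (enum_n i :: 'n::finite) = i"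
  using bij_enum[where 'n='n] unfolding inv_enum_def
  by (simp add: bij_betw_inv_into_left)

lemma enum_inj: "i < CARD('n) \<Longrightarrow> j < CARD('n) \<Longrightarrow> (enum_n i :: 'n::finite) = enum_n j \<longleftrightarrow> i = j"
  by (metis inv_enum)

definition emb :: "(nat \<Rightarrow> real) \<Rightarrow> real^'n::finite" where
  "emb x = (\<chi> j. x (inv_enum j))"

definition prj :: "real^'n::finite \<Rightarrow> nat \<Rightarrow> real" where
  "prj y = (\<lambda>i. if i < CARD('n) then y $ enum_n i else 0)"

lemma emb_nth [simp]: "i < CARD('n) \<Longrightarrow> (emb x :: real^'n::finite) $ enum_n i = x i"
  by (simp add: emb_def)

lemma emb_prj [simp]: "emb (prj (y :: real^'n::finite)) = y"
  by (simp add: emb_def prj_def inv_enum_lt vec_eq_iff)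

lemma prj_emb: "prj (emb x :: real^'n::finite) = (\<lambda>i. if i < CARD('n) then x i else 0)"
  by (simp add: prj_def fun_eq_iff)

lemma emb_neg: "(emb (\<lambda>i. - x i) :: real^'n::finite) = - emb x"
  by (simp add: emb_def vec_eq_iff)

lemma prj_neg: "prj (- (y :: real^'n::finite)) = (\<lambda>i. - prj y i)"
  by (simp add: prj_def fun_eq_iff)

lemma cont_emb: "continuous_on S (emb :: (nat \<Rightarrow> real) \<Rightarrow> real^'n::finite)"
  unfolding emb_def by (intro continuous_intros cont_coord)

lemma cont_prj: "continuous_on S (prj :: real^'n::finite \<Rightarrow> nat \<Rightarrow> real)"
  unfolding prj_def
proof (intro continuous_on_coordinatewise_then_product)
  fix i show "continuous_on S (\<lambda>x::real^'n. if i < CARD('n) then x $ enum_n i else 0)"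
    by (cases "i < CARD('n)") (simp_all add: continuous_intros)
qed

lemma norm_sq_enum: "(norm (y :: real^'n::finite))\<^sup>2 = (\<Sum>i<CARD('n). (y $ enum_n i)\<^sup>2)"
proof -
  have "(norm y)\<^sup>2 = (\<Sum>j\<in>UNIV. (y $ j)\<^sup>2)"
    unfolding power2_norm_eq_inner inner_vec_def by (simp add: power2_eq_square)
  also have "\<dots> = (\<Sum>i<CARD('n). (y $ enum_n i)\<^sup>2)"
    by (rule sum.reindex_bij_betw[OF bij_enum, symmetric])
  finally show ?thesis .
qed

definition Tsub :: "nat \<Rightarrow> (real^'n::finite) set" where
  "Tsub k = {y. \<forall>i. k < i \<and> i < CARD('n) \<longrightarrow> y $ enum_n i = 0}"

lemma subspace_Tsub: "subspace (Tsub k)"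
  by (auto simp: subspace_def Tsub_def)

lemma Tsub_mono: "j \<le> k \<Longrightarrow> Tsub j \<subseteq> Tsub k"
  by (auto simp: Tsub_def)

lemma sum_upto_k:
  assumes "k < (N::nat)" "\<And>i. k < i \<Longrightarrow> i < N \<Longrightarrow> g i = (0::real)"
  shows "(\<Sum>i<N. g i) = (\<Sum>i\<le>k. g i)"
proof -
  have "(\<Sum>i<N. g i) = (\<Sum>i\<in>{..k}. g i)"
  proof (rule sum.mono_neutral_right)
    show "\<forall>i\<in>{..<N} - {..k}. g i = 0"
    proof
      fix i assume "i \<in> {..<N} - {..k}"
      then have "k < i" "i < N" by auto
      then show "g i = 0" by (rule assms(2))
    qed
  qed (use assms(1) in auto)
  then show ?thesis by simp
qed

lemma prj_S:
  assumes "y \<in> sphere 0 1 \<inter> Tsub k" "k < CARD('n)"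
  shows "prj (y :: real^'n::finite) \<in> Sph k"
proof -
  have "(\<Sum>i\<le>k. (prj y i)\<^sup>2) = (\<Sum>i<CARD('n). (y $ enum_n i)\<^sup>2)"
    using assms by (subst sum_upto_k[of k "CARD('n)"]) (auto simp: prj_def Tsub_def)
  also have "\<dots> = 1" using assms by (simp flip: norm_sq_enum)
  finally show ?thesis using assms by (auto simp: Sph_def prj_def Tsub_def)
qed

lemma emb_S:
  assumes "x \<in> Sph k" "k < CARD('n)"
  shows "(emb x :: real^'n::finite) \<in> sphere 0 1 \<inter> Tsub k"
proof -
  have "(norm (emb x :: real^'n))\<^sup>2 = (\<Sum>i<CARD('n). x i ^ 2)"
    by (simp add: norm_sq_enum)
  also have "\<dots> = (\<Sum>i\<le>k. x i ^ 2)"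
    using assms by (subst sum_upto_k[of k "CARD('n)"]) (auto simp: Sph_def)
  also have "\<dots> = 1" using assms by (simp add: Sph_def)
  finally have "norm (emb x :: real^'n) = 1"
    using norm_ge_zero[of "emb x :: real^'n"] by (simp add: power2_eq_1_iff)
  moreover have "emb x \<in> Tsub k" using assms by (auto simp: Tsub_def Sph_def)
  ultimately show ?thesis by simp
qed

lemma prj_emb_Sph: "x \<in> Sph k \<Longrightarrow> k < CARD('n::finite) \<Longrightarrow> prj (emb x :: real^'n) = x"
  by (auto simp: prj_emb Sph_def fun_eq_iff)

lemma approx_step_proof:
  assumes k: "k < CARD('n::finite)" "0 < k"
    and cm: "continuous_map (nsphere k) (nsphere k) f"
    and odd: "\<And>x. x \<in> Sph k \<Longrightarrow> f (\<lambda>i. - x i) = (\<lambda>i. - f x i)"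
  obtains f1 v where "continuous_map (nsphere k) (nsphere k) f1"
    "\<And>x. x \<in> Sph k \<Longrightarrow> f1 (\<lambda>i. - x i) = (\<lambda>i. - f1 x i)"
    "homotopic_with (\<lambda>x. True) (nsphere k) (nsphere k) f f1"
    "v \<in> Sph k" "v \<notin> f1 ` Sph (k - 1)"
proof -
  define S where "S = sphere (0::real^'n) 1 \<inter> Tsub k"
  have contf: "continuous_on (Sph k) f" and fS: "\<And>x. x \<in> Sph k \<Longrightarrow> f x \<in> Sph k"
    using cm by (auto simp: cm_nsphere_iff)
  have prjS: "prj y \<in> Sph k" if "y \<in> S" for y
    using prj_S[of y k] that k(1) by (simp add: S_def)
  have embS: "emb x \<in> S" if "x \<in> Sph k" for x
    using emb_S[OF that k(1)] by (simp add: S_def)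
  define F where "F y = (emb (f (prj y)) :: real^'n)" for y :: "real^'n"
  have FS: "F y \<in> S" if "y \<in> S" for y
    using embS fS prjS that by (simp add: F_def)
  have contF: "continuous_on S F"
  proof -
    have "continuous_on S (\<lambda>y. f (prj y))"
      by (rule continuous_on_compose2[OF contf cont_prj]) (auto simp: prjS)
    then show ?thesis
      unfolding F_def by (rule continuous_on_compose2[OF cont_emb]) auto
  qed
  have Sneg: "- y \<in> S" if "y \<in> S" for y
    using that by (simp add: S_def subspace_neg subspace_Tsub)
  have Fodd: "F (- y) = - F y" if "y \<in> S" for y
    using odd[OF prjS[OF that]] by (simp add: F_def prj_neg emb_neg)
  have compS: "compact S"
    unfolding S_def by (simp add: closed_subspace compact_Int_closed subspace_Tsub)
  have FT: "F ` S \<subseteq> Tsub k" using FS by (auto simp: S_def)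
  obtain g where pg: "polynomial_function g" and gT: "g ` S \<subseteq> Tsub k"
    and gF: "\<And>y. y \<in> S \<Longrightarrow> norm (F y - g y) < 1/2"
    using Stone_Weierstrass_polynomial_function_subspace[OF compS contF _ subspace_Tsub FT, of "1/2"]
    by auto
  define go where "go y = (1/2::real) *\<^sub>R (g y - g (- y))" for y :: "real^'n"
  have pgo: "polynomial_function go"
  proof -
    have "polynomial_function (g \<circ> (\<lambda>x. - x))"
      by (rule polynomial_function_compose[OF polynomial_function_minus[OF polynomial_function_id] pg])
    then have "polynomial_function (\<lambda>y. g (- y))" by (simp add: o_def)
    then show ?thesis unfolding go_def using pg by (intro polynomial_function_cmul polynomial_function_diff)
  qed
  have goT: "go y \<in> Tsub k" if "y \<in> S" for y
    using gT that Sneg[OF that] unfolding go_def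
    by (intro subspace_scale subspace_diff subspace_Tsub) auto
  have goodd: "go (- y) = - go y" for y by (simp add: go_def algebra_simps)
  have Fgo: "norm (F y - go y) < 1/2" if "y \<in> S" for y
  proof -
    have "F y - go y = (1/2::real) *\<^sub>R ((F y - g y) - (F (- y) - g (- y)))"
      unfolding go_def using Fodd[OF that] by (simp add: vec_eq_iff algebra_simps)
    then have "norm (F y - go y) \<le> (1/2) * (norm (F y - g y) + norm (F (- y) - g (- y)))"
      by (simp add: norm_triangle_ineq4)
    also have "\<dots> < (1/2) * (1/2 + 1/2)"
      using gF[OF that] gF[OF Sneg[OF that]] by simp
    finally show ?thesis by simp
  qed
  have Fn1: "norm (F y) = 1" if "y \<in> S" for y using FS[OF that] by (simp add: S_def)
  have gonz: "go y \<noteq> 0" if "y \<in> S" for y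
    using Fgo[OF that] Fn1[OF that] by auto
  define G where "G y = inverse (norm (go y)) *\<^sub>R go y" for y :: "real^'n"
  have diffgo: "go differentiable_on S"
    by (rule differentiable_on_polynomial_function[OF pgo])
  have diffG: "G differentiable_on S"
    unfolding G_def using gonz
    by (fastforce intro: derivative_intros diffgo differentiable_on_compose [OF diffgo])
  have contG: "continuous_on S G" by (rule differentiable_imp_continuous_on[OF diffG])
  have GS: "G y \<in> S" if "y \<in> S" for y
    using gonz[OF that] goT[OF that] by (simp add: G_def S_def subspace_scale subspace_Tsub)
  have Godd: "G (- y) = - G y" for y by (simp add: G_def goodd)
  have sub: "Tsub (k - 1) \<subseteq> Tsub k" by (rule Tsub_mono) simp
  have dimlt: "dim (Tsub (k - 1) :: (real^'n) set) < dim (Tsub k :: (real^'n) set)"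
  proof (rule dim_psubset)
    have a1: "axis (enum_n k) 1 \<in> (Tsub k :: (real^'n) set)"
      using k by (auto simp: Tsub_def axis_def enum_inj)
    have a2: "axis (enum_n k) 1 \<notin> (Tsub (k - 1) :: (real^'n) set)"
      using k by (auto simp: Tsub_def axis_def)
    show "span (Tsub (k - 1)) \<subset> span (Tsub k :: (real^'n) set)"
    proof -
      have sp: "span (Tsub j :: (real^'n) set) = Tsub j" for j by (simp add: subspace_Tsub)
      show ?thesis unfolding sp using sub a1 a2 by auto
    qed
  qed
  have diffG': "G differentiable_on sphere 0 1 \<inter> Tsub (k - 1)"
    by (rule differentiable_on_subset[OF diffG]) (use sub in \<open>auto simp: S_def\<close>)
  have "G ` (sphere 0 1 \<inter> Tsub (k - 1)) \<noteq> sphere 0 1 \<inter> Tsub k"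
    by (rule spheremap_lemma1[OF subspace_Tsub subspace_Tsub dimlt sub diffG'])
  moreover have "G ` (sphere 0 1 \<inter> Tsub (k - 1)) \<subseteq> S"
    using GS sub by (auto simp: S_def)
  ultimately obtain w where w: "w \<in> S" "w \<notin> G ` (sphere 0 1 \<inter> Tsub (k - 1))"
    unfolding S_def by blast
  define f1 where "f1 x = prj (G (emb x))" for x
  define v where "v = prj w"
  have contf1: "continuous_on (Sph k) f1"
  proof -
    have "continuous_on (Sph k) (\<lambda>x. G (emb x))"
      by (rule continuous_on_compose2[OF contG cont_emb]) (auto simp: embS)
    then show ?thesis unfolding f1_def by (rule continuous_on_compose2[OF cont_prj]) auto
  qed
  have f1S: "f1 x \<in> Sph k" if "x \<in> Sph k" for x
    using that by (simp add: f1_def prjS GS embS)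
  define D where "D z = F (snd z) + fst z *\<^sub>R (go (snd z) - F (snd z))" for z :: "real \<times> (real^'n)"
  have Dnz: "D z \<noteq> 0" if "fst z \<in> {0..1}" "snd z \<in> S" for z
  proof -
    have "norm (fst z *\<^sub>R (go (snd z) - F (snd z))) \<le> norm (go (snd z) - F (snd z))"
      using that(1) by (simp add: mult_left_le_one_le)
    also have "\<dots> < 1/2" using Fgo[OF that(2)] by (simp add: norm_minus_commute)
    finally have "norm (fst z *\<^sub>R (go (snd z) - F (snd z))) < 1/2" .
    moreover have "norm (F (snd z)) - norm (fst z *\<^sub>R (go (snd z) - F (snd z))) \<le> norm (D z)"
      unfolding D_def by (rule norm_diff_ineq)
    ultimately have "0 < norm (D z)" using Fn1[OF that(2)] by linarith
    then show ?thesis by simp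
  qed
  have DT: "D z \<in> Tsub k" if "snd z \<in> S" for z
    using FS[OF that] goT[OF that] unfolding D_def S_def
    by (intro subspace_add subspace_scale subspace_diff subspace_Tsub) auto
  define h where "h z = prj (inverse (norm (D (fst z, emb (snd z)))) *\<^sub>R D (fst z, emb (snd z)))"
    for z :: "real \<times> (nat \<Rightarrow> real)"
  have hS: "h z \<in> Sph k" if "z \<in> {0..1} \<times> Sph k" for z
  proof -
    have "emb (snd z) \<in> S" using that embS by auto
    then have "inverse (norm (D (fst z, emb (snd z)))) *\<^sub>R D (fst z, emb (snd z)) \<in> S"
      using Dnz[of "(fst z, emb (snd z))"] DT[of "(fst z, emb (snd z))"] that
      by (auto simp: S_def subspace_scale subspace_Tsub)
    then show ?thesis unfolding h_def by (rule prjS)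
  qed
  have h0: "h (0, x) = f x" if "x \<in> Sph k" for x
  proof -
    have "D (0, emb x) = F (emb x)" by (simp add: D_def)
    moreover have "norm (F (emb x)) = 1" using Fn1 embS that by blast
    moreover have "prj (F (emb x)) = f x"
      using that fS[OF that] k by (simp add: F_def prj_emb_Sph)
    ultimately show ?thesis by (simp add: h_def)
  qed
  have h1: "h (1, x) = f1 x" for x
    by (simp add: h_def D_def f1_def G_def)
  have conth: "continuous_on ({0..1} \<times> Sph k) h"
  proof -
    have c1: "continuous_on ({0..1} \<times> Sph k) (\<lambda>z. (fst z, emb (snd z) :: real^'n))"
      by (intro continuous_intros continuous_on_compose2[OF cont_emb continuous_on_snd]) auto
    have cF: "continuous_on ({0..1::real} \<times> S) (\<lambda>z. F (snd z))"
      by (rule continuous_on_compose2[OF contF continuous_on_snd]) auto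
    have cgo: "continuous_on ({0..1::real} \<times> S) (\<lambda>z. go (snd z))"
      by (rule continuous_on_compose2[OF differentiable_imp_continuous_on[OF diffgo] continuous_on_snd]) auto
    have cD: "continuous_on ({0..1::real} \<times> S) D"
      unfolding D_def by (intro continuous_intros cF cgo)
    have c3: "continuous_on ({0..1::real} \<times> S) (\<lambda>z. inverse (norm (D z)) *\<^sub>R D z)"
      using Dnz by (intro continuous_intros cD) auto
    have "continuous_on ({0..1} \<times> Sph k) (\<lambda>z. inverse (norm (D (fst z, emb (snd z)))) *\<^sub>R D (fst z, emb (snd z)))"
      using continuous_on_compose2[OF c3 c1] embS by (auto simp: image_subset_iff)
    then show ?thesis unfolding h_def by (rule continuous_on_compose2[OF cont_prj]) auto
  qed
  show thesis
  proof
    show hom: "homotopic_with (\<lambda>x. True) (nsphere k) (nsphere k) f f1"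
      unfolding homotopic_nsphere_iff
      by (rule exI[of _ h]) (use conth hS h0 h1 in auto)
    show "continuous_map (nsphere k) (nsphere k) f1"
      using contf1 f1S by (simp add: cm_nsphere_iff)
    show "f1 (\<lambda>i. - x i) = (\<lambda>i. - f1 x i)" if "x \<in> Sph k" for x
      by (simp add: f1_def emb_neg Godd prj_neg)
    show "v \<in> Sph k" using prjS w(1) by (simp add: v_def)
    show "v \<notin> f1 ` Sph (k - 1)"
    proof
      assume "v \<in> f1 ` Sph (k - 1)"
      then obtain x where x: "x \<in> Sph (k - 1)" "v = f1 x" by auto
      have "w = emb v" by (simp add: v_def)
      also have "\<dots> = G (emb x)" by (simp add: x f1_def)
      finally have "w = G (emb x)" .
      moreover have "(emb x :: real^'n) \<in> sphere 0 1 \<inter> Tsub (k - 1)" using emb_S[OF x(1), where 'n='n] k by simp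
      ultimately show False using w(2) by auto
    qed
  qed
qed

lemma Sph0: "Sph 0 = {(\<lambda>i. if i = 0 then 1 else 0), (\<lambda>i. if i = 0 then -1 else 0)}"
proof -
  have "x \<in> Sph 0 \<longleftrightarrow> x = (\<lambda>i. if i = 0 then 1 else 0) \<or> x = (\<lambda>i. if i = 0 then -1 else 0)" for x
  proof
    assume x: "x \<in> Sph 0"
    then have "(x 0)\<^sup>2 = 1" "\<forall>i>0. x i = 0" by (auto simp: Sph_def)
    then have "x 0 = 1 \<or> x 0 = -1" by (simp add: power2_eq_1_iff)
    then show "x = (\<lambda>i. if i = 0 then 1 else 0) \<or> x = (\<lambda>i. if i = 0 then -1 else 0)"
      using \<open>\<forall>i>0. x i = 0\<close> by (auto simp: fun_eq_iff)
  next
    assume "x = (\<lambda>i. if i = 0 then 1 else 0) \<or> x = (\<lambda>i. if i = 0 then -1 else 0)"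
    then show "x \<in> Sph 0" by (auto simp: Sph_def)
  qed
  then show ?thesis by auto
qed

lemma odd_degree:
  assumes "m < CARD('n::finite)"
    and "continuous_map (nsphere m) (nsphere m) f"
    and "\<And>x. x \<in> Sph m \<Longrightarrow> f (\<lambda>i. - x i) = (\<lambda>i. - f x i)"
  shows "odd (Brouwer_degree2 m f)"
  using assms
proof (induction m arbitrary: f)
  case 0
  define e where "e = (\<lambda>i::nat. if i = 0 then (1::real) else 0)"
  have e': "(\<lambda>i. - e i) = (\<lambda>i::nat. if i = 0 then (-1::real) else 0)" by (auto simp: e_def)
  have S0: "Sph 0 = {e, (\<lambda>i. - e i)}" by (simp only: e') (simp add: Sph0 e_def)
  have fe: "f e \<in> Sph 0" using "0.prems"(2) S0 by (auto simp: cm_nsphere_iff)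
  have fne: "f (\<lambda>i. - e i) = (\<lambda>i. - f e i)" using "0.prems"(3) S0 by auto
  show ?case
  proof (cases "f e = e")
    case True
    have "Brouwer_degree2 0 f = Brouwer_degree2 0 id"
      by (rule Brouwer_degree2_eq) (use S0 True fne in auto)
    then show ?thesis by simp
  next
    case False
    then have fe': "f e = (\<lambda>i. - e i)" using fe S0 by auto
    have "Brouwer_degree2 0 f = Brouwer_degree2 0 (\<lambda>x i. if i = 0 then -x i else x i)"
    proof (rule Brouwer_degree2_eq)
      fix x assume "x \<in> topspace (nsphere 0)"
      then have "x = e \<or> x = (\<lambda>i. - e i)" using S0 by auto
      have r1: "(\<lambda>i. if i = 0 then - e i else e i) = (\<lambda>i. - e i)" by (auto simp: e_def fun_eq_iff)
      have r2: "(\<lambda>i. if i = 0 then - (- e i) else - e i) = e" by (auto simp: e_def fun_eq_iff)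
      have A: "f e = (\<lambda>i. if i = 0 then - e i else e i)" using fe' r1 by simp
      have B: "f (\<lambda>i. - e i) = (\<lambda>i. if i = 0 then - (- e i) else - e i)" using fne fe' r2 by simp
      from \<open>x = e \<or> x = (\<lambda>i. - e i)\<close> show "f x = (\<lambda>i. if i = 0 then - x i else x i)"
        using A B by metis
    qed
    then show ?thesis by (simp add: Brouwer_degree2_reflection)
  qed
next
  case (Suc m)
  let ?k = "Suc m"
  obtain f1 v where cm1: "continuous_map (nsphere ?k) (nsphere ?k) f1"
    and odd1: "\<And>x. x \<in> Sph ?k \<Longrightarrow> f1 (\<lambda>i. - x i) = (\<lambda>i. - f1 x i)"
    and hom1: "homotopic_with (\<lambda>x. True) (nsphere ?k) (nsphere ?k) f f1"
    and v: "v \<in> Sph ?k" "v \<notin> f1 ` Sph m"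
    using approx_step_proof[of ?k f, where 'n='n] Suc.prems by auto
  obtain H where cmH: "continuous_map (nsphere ?k) (nsphere ?k) H"
    and homH: "homeomorphic_map (nsphere ?k) (nsphere ?k) H"
    and oddH: "\<And>x. H (\<lambda>i. - x i) = (\<lambda>i. - H x i)"
    and He: "\<And>x. H x = (\<lambda>i. if i = ?k then 1 else 0) \<Longrightarrow> x = v"
    using householder[OF v(1)] by blast
  define f2 where "f2 = H \<circ> f1"
  have cm2: "continuous_map (nsphere ?k) (nsphere ?k) f2"
    unfolding f2_def using cm1 cmH by (rule continuous_map_compose)
  have odd2: "f2 (\<lambda>i. - x i) = (\<lambda>i. - f2 x i)" if "x \<in> Sph ?k" for x
    using odd1[OF that] oddH by (simp add: f2_def)
  have np: "0 < (\<Sum>i\<le>m. (f2 x i)\<^sup>2)" if x: "x \<in> Sph m" for x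
  proof (rule ccontr)
    assume "\<not> ?thesis"
    then have "(\<Sum>i\<le>m. (f2 x i)\<^sup>2) = 0" by (simp add: not_less antisym sum_nonneg)
    then have z: "\<forall>i\<le>m. f2 x i = 0" by (subst (asm) sum_nonneg_eq_0_iff) auto
    have xk: "x \<in> Sph ?k" using x Sph_sub by blast
    have "f2 x \<in> Sph ?k" using cm2 xk by (auto simp: cm_nsphere_iff)
    then have "(f2 x ?k)\<^sup>2 = 1" "\<forall>i>?k. f2 x i = 0" using z by (auto simp: Sph_def)
    then have "f2 x ?k = 1 \<or> f2 x ?k = -1" by (simp add: power2_eq_1_iff)
    then obtain c where c: "c = 1 \<or> c = -1" "f2 x ?k = c" by blast
    have f2x: "f2 x = (\<lambda>i. if i = ?k then c else 0)"
    proof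
      fix i show "f2 x i = (if i = ?k then c else 0)"
      proof (cases "i \<le> m")
        case True then show ?thesis using z by auto
      next
        case False then have "i = ?k \<or> i > ?k" by auto
        then show ?thesis using c \<open>\<forall>i>?k. f2 x i = 0\<close> by auto
      qed
    qed
    have mx: "(\<lambda>i. - x i) \<in> Sph m" using x by (auto simp: Sph_def)
    show False using c(1)
    proof
      assume "c = 1"
      then have "H (f1 x) = (\<lambda>i. if i = ?k then 1 else 0)" using f2x by (auto simp: f2_def fun_eq_iff)
      then have "f1 x = v" by (rule He)
      then show False using v(2) x by auto
    next
      assume "c = -1"
      have "f2 (\<lambda>i. - x i) = (\<lambda>i. - f2 x i)" using odd2 xk .
      also have "\<dots> = (\<lambda>i. if i = ?k then 1 else 0)" using f2x \<open>c = -1\<close> by (simp add: fun_eq_iff)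
      finally have "H (f1 (\<lambda>i. - x i)) = (\<lambda>i. if i = ?k then 1 else 0)" by (simp add: f2_def)
      then have "f1 (\<lambda>i. - x i) = v" by (rule He)
      then show False using v(2) mx by auto
    qed
  qed
  obtain f3 where cm3: "continuous_map (nsphere ?k) (nsphere ?k) f3"
    and odd3: "\<And>x. x \<in> Sph ?k \<Longrightarrow> f3 (\<lambda>i. - x i) = (\<lambda>i. - f3 x i)"
    and hom3: "homotopic_with (\<lambda>x. True) (nsphere ?k) (nsphere ?k) f2 f3"
    and eq3: "f3 \<in> Sph m \<rightarrow> Sph m"
    using squash[OF cm2 odd2 np] by blast
  have step: "even (Brouwer_degree2 ?k f3 - Brouwer_degree2 (?k - Suc 0) f3)"
  proof (rule Borsuk_odd_mapping_degree_step[OF cm3])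
    show "(f3 \<circ> (\<lambda>x i. - x i)) u = ((\<lambda>x i. - x i) \<circ> f3) u" if "u \<in> topspace (nsphere ?k)" for u
      using odd3 that by simp
    show "f3 \<in> topspace (nsphere (?k - Suc 0)) \<rightarrow> topspace (nsphere (?k - Suc 0))"
      using eq3 by simp
  qed
  have "odd (Brouwer_degree2 m f3)"
  proof (rule Suc.IH)
    show "m < CARD('n)" using Suc.prems by simp
    have "continuous_on (Sph m) f3"
      using cm3 Sph_sub by (auto simp: cm_nsphere_iff intro: continuous_on_subset)
    then show "continuous_map (nsphere m) (nsphere m) f3" using eq3 by (simp add: cm_nsphere_iff)
    show "f3 (\<lambda>i. - x i) = (\<lambda>i. - f3 x i)" if "x \<in> Sph m" for x
      using odd3 Sph_sub that by blast
  qed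
  then have o3: "odd (Brouwer_degree2 ?k f3)" using step by simp
  have "Brouwer_degree2 ?k f2 = Brouwer_degree2 ?k f3"
    by (rule Brouwer_degree2_homotopic[OF hom3])
  moreover have "Brouwer_degree2 ?k f2 = Brouwer_degree2 ?k H * Brouwer_degree2 ?k f1"
    unfolding f2_def by (rule Brouwer_degree2_compose[OF cm1 cmH])
  moreover have "Brouwer_degree2 ?k f = Brouwer_degree2 ?k f1"
    by (rule Brouwer_degree2_homotopic[OF hom1])
  ultimately have "odd (Brouwer_degree2 ?k H * Brouwer_degree2 ?k f1)"
    "Brouwer_degree2 ?k f = Brouwer_degree2 ?k f1" using o3 by auto
  then show ?case by simp
qed

lemma BU:
  fixes g :: "(nat \<Rightarrow> real) \<Rightarrow> nat \<Rightarrow> real"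
  assumes k: "0 < k" "k < CARD('n::finite)"
    and cont: "continuous_on (Sph k) g"
    and zero: "\<And>x i. x \<in> Sph k \<Longrightarrow> k \<le> i \<Longrightarrow> g x i = 0"
    and odd: "\<And>x. x \<in> Sph k \<Longrightarrow> g (\<lambda>i. - x i) = (\<lambda>i. - g x i)"
    and nz: "\<And>x. x \<in> Sph k \<Longrightarrow> \<exists>i<k. g x i \<noteq> 0"
  shows False
proof -
  define Q where "Q x = (\<Sum>i<k. (g x i)\<^sup>2)" for x
  define N where "N x = sqrt (Q x)" for x
  define h where "h x = (\<lambda>i. g x i / N x)" for x
  have Qpos: "Q x > 0" if x: "x \<in> Sph k" for x
  proof -
    obtain i where "i < k" "g x i \<noteq> 0" using nz[OF x] by blast
    then have "(g x i)\<^sup>2 \<le> Q x" unfolding Q_def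
      by (intro member_le_sum) auto
    moreover have "(g x i)\<^sup>2 > 0" using \<open>g x i \<noteq> 0\<close> by simp
    ultimately show ?thesis by linarith
  qed
  have hS: "h x \<in> Sph k" if x: "x \<in> Sph k" for x
  proof -
    have "(\<Sum>i\<le>k. (h x i)\<^sup>2) = (\<Sum>i<Suc k. (h x i)\<^sup>2)" by (simp add: lessThan_Suc_atMost)
    also have "\<dots> = (\<Sum>i<k. (h x i)\<^sup>2)" using zero[OF x, of k] by (simp add: h_def)
    also have "\<dots> = Q x / (N x)\<^sup>2" by (simp add: h_def Q_def power_divide sum_divide_distrib)
    also have "\<dots> = 1" using Qpos[OF x] by (simp add: N_def)
    finally show ?thesis using zero[OF x] by (auto simp: Sph_def h_def)
  qed
  have hk: "h x k = 0" if "x \<in> Sph k" for x using zero[OF that, of k] by (simp add: h_def)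
  have conth: "continuous_on (Sph k) h"
  proof -
    have cg: "continuous_on (Sph k) (\<lambda>x. g x i)" for i
      by (rule continuous_on_product_then_coordinatewise[OF cont])
    have cN: "continuous_on (Sph k) N" unfolding N_def Q_def by (intro continuous_intros cg)
    have Nnz: "\<forall>x\<in>Sph k. N x \<noteq> 0"
    proof
      fix x assume "x \<in> Sph k"
      then have "0 < Q x" by (rule Qpos)
      then show "N x \<noteq> 0" by (simp add: N_def)
    qed
    show ?thesis unfolding h_def
      by (intro continuous_on_coordinatewise_then_product continuous_on_divide cg cN Nnz)
  qed
  have cm: "continuous_map (nsphere k) (nsphere k) h"
    using conth hS by (simp add: cm_nsphere_iff)
  have hodd: "h (\<lambda>i. - x i) = (\<lambda>i. - h x i)" if "x \<in> Sph k" for x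
  proof -
    have "Q (\<lambda>i. - x i) = Q x" by (simp add: Q_def odd[OF that])
    then show ?thesis by (simp add: h_def N_def odd[OF that])
  qed
  have "odd (Brouwer_degree2 k h)"
    by (rule odd_degree[OF k(2) cm hodd])
  moreover have "Brouwer_degree2 k h = 0"
  proof (rule Brouwer_degree2_nonsurjective[OF cm])
    have "(\<Sum>i\<le>k. (if i = k then (1::real) else 0)\<^sup>2) = (\<Sum>i\<le>k. if i = k then 1 else 0)"
      by (rule sum.cong) auto
    then have "(\<lambda>i. if i = k then 1 else 0) \<in> Sph k" by (simp add: Sph_def)
    moreover have "(\<lambda>i. if i = k then 1 else 0) \<notin> h ` Sph k"
    proof
      assume "(\<lambda>i. if i = k then 1 else 0) \<in> h ` Sph k"
      then obtain x where x: "x \<in> Sph k" "(\<lambda>i. if i = k then 1 else 0) = h x" by auto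
      have "(\<lambda>i. if i = k then (1::real) else 0) k = h x k" using x(2) by (rule fun_cong)
      then show False using hk[OF x(1)] by simp
    qed
    ultimately show "h ` topspace (nsphere k) \<noteq> topspace (nsphere k)" by auto
  qed
  ultimately show False by simp
qed

lemma pnorm_scale: "pnorm_p p (c *\<^sub>R x) = \<bar>c\<bar> powr p * pnorm_p p x"
  by (simp add: pnorm_p_def abs_mult powr_mult sum_distrib_left)

lemma pnorm_neg: "pnorm_p p (- x) = pnorm_p p x"
  by (simp add: pnorm_p_def)

lemma pnorm_pos: assumes "x \<noteq> 0" shows "0 < pnorm_p p x"
proof -
  obtain j where "x $ j \<noteq> 0" using assms by (auto simp: vec_eq_iff)
  then have "0 < \<bar>x $ j\<bar> powr p" by simp
  also have "\<dots> \<le> pnorm_p p x" unfolding pnorm_p_def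
    by (rule member_le_sum) auto
  finally show ?thesis .
qed

lemma cont_pnorm: assumes "0 < p" shows "continuous_on S (pnorm_p p :: real^'n::finite \<Rightarrow> real)"
  unfolding pnorm_p_def
proof (intro continuous_on_sum)
  fix i
  show "continuous_on S (\<lambda>x::real^'n. \<bar>x $ i\<bar> powr p)"
  proof (rule continuous_on_powr')
    show "continuous_on S (\<lambda>x::real^'n. \<bar>x $ i\<bar>)"
      by (intro continuous_on_rabs continuous_on_component continuous_on_id)
  qed (use assms in auto)
qed

lemma sphere_p_nz: "x \<in> sphere_p p \<Longrightarrow> x \<noteq> 0"
  by (auto simp: sphere_p_def pnorm_p_def)

lemma sphere_p_neg: "x \<in> sphere_p p \<Longrightarrow> - x \<in> sphere_p p"
  by (simp add: sphere_p_def pnorm_neg)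

lemma closed_sphere_p: "0 < p \<Longrightarrow> closed (sphere_p p)"
  unfolding sphere_p_def by (rule closed_Collect_eq[OF cont_pnorm continuous_on_const])

lemma normalize_p:
  assumes "0 < p" "y \<noteq> 0"
  shows "(pnorm_p p y powr (-1/p)) *\<^sub>R y \<in> sphere_p p"
proof -
  have P: "0 < pnorm_p p y" using pnorm_pos[OF assms(2)] .
  have "pnorm_p p ((pnorm_p p y powr (-1/p)) *\<^sub>R y) = (pnorm_p p y powr (-1/p)) powr p * pnorm_p p y"
    by (simp add: pnorm_scale)
  also have "\<dots> = pnorm_p p y powr (-1) * pnorm_p p y"
    using assms(1) by (simp add: powr_powr)
  also have "\<dots> = 1" using P by (simp add: powr_minus)
  finally show ?thesis by (simp add: sphere_p_def)
qed

lemma coord_bound: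
  assumes "0 < p" "x \<in> sphere_p p" shows "\<bar>x $ i\<bar> \<le> 1"
proof (rule ccontr)
  assume "\<not> ?thesis"
  then have "1 < \<bar>x $ i\<bar>" by simp
  then have "1 powr p < \<bar>x $ i\<bar> powr p" using assms(1) by (intro powr_less_mono2) auto
  also have "\<dots> \<le> pnorm_p p x" unfolding pnorm_p_def by (rule member_le_sum) auto
  finally show False using assms(2) by (simp add: sphere_p_def)
qed

lemma genus_le: "odd_map_to B j \<Longrightarrow> genus B \<le> j"
  unfolding genus_def by (rule Least_le)

lemma genus_geI:
  assumes "odd_map_to B N" "\<And>j. j < K \<Longrightarrow> \<not> odd_map_to B j"
  shows "K \<le> genus B"
proof -
  have "odd_map_to B (genus B)" unfolding genus_def by (rule LeastI[of _ N]) (rule assms(1))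
  then show ?thesis using assms(2) not_le by blast
qed

lemma odd_map_empty: "odd_map_to {} 0"
  by (auto simp: odd_map_to_def)

lemma odd_map_sphere_n: "odd_map_to (sphere_p p :: (real^'n::finite) set) CARD('n)"
  unfolding odd_map_to_def
proof (intro exI[of _ "\<lambda>x i. x $ enum_n i"] conjI ballI allI impI)
  fix i show "continuous_on (sphere_p p) (\<lambda>x::real^'n. x $ enum_n i)"
    by (intro continuous_intros)
next
  fix x :: "real^'n" and i show "(- x) $ enum_n i = - x $ enum_n i" by simp
next
  fix x :: "real^'n" assume "x \<in> sphere_p p"
  then have "x \<noteq> 0" by (rule sphere_p_nz)
  then obtain j where "x $ j \<noteq> 0" by (auto simp: vec_eq_iff)
  then show "\<exists>i<CARD('n). x $ enum_n i \<noteq> 0"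
    by (intro exI[of _ "inv_enum j"]) (simp add: inv_enum_lt)
qed

lemma two_powr_neg: "((\<lambda>p::real. 2 powr (-p)) \<longlongrightarrow> 0) at_top"
proof -
  have "LIM p at_top. ln 2 * (p::real) :> at_top"
    by (rule filterlim_tendsto_pos_mult_at_top[OF tendsto_const _ filterlim_ident]) simp
  then have "LIM p at_top. - (ln 2 * (p::real)) :> at_bot"
    by (simp add: filterlim_uminus_at_top)
  then have "((\<lambda>p. exp (- (ln 2 * (p::real)))) \<longlongrightarrow> 0) at_top"
    by (rule filterlim_compose[OF exp_at_bot])
  moreover have "(\<lambda>p::real. 2 powr (-p)) = (\<lambda>p. exp (- (ln 2 * p)))"
    by (simp add: powr_def fun_eq_iff mult.commute)
  ultimately show ?thesis by simp
qed

lemma genus_sphere: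
  assumes p: "0 < p" and n2: "2 \<le> CARD('n::finite)"
  shows "CARD('n) \<le> genus (sphere_p p :: (real^'n) set)"
proof (rule genus_geI[OF odd_map_sphere_n])
  fix j assume j: "j < CARD('n)"
  show "\<not> odd_map_to (sphere_p p :: (real^'n) set) j"
  proof
    assume "odd_map_to (sphere_p p :: (real^'n) set) j"
    then obtain g :: "real^'n \<Rightarrow> nat \<Rightarrow> real"
      where gc: "\<And>i. i < j \<Longrightarrow> continuous_on (sphere_p p) (\<lambda>x. g x i)"
        and go: "\<And>x i. x \<in> sphere_p p \<Longrightarrow> i < j \<Longrightarrow> g (- x) i = - g x i"
        and gn: "\<And>x. x \<in> sphere_p p \<Longrightarrow> \<exists>i<j. g x i \<noteq> 0"
      unfolding odd_map_to_def by blast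
    let ?k = "CARD('n) - 1"
    have k: "0 < ?k" "?k < CARD('n)" using n2 by auto
    define psi where "psi x = (pnorm_p p (emb x :: real^'n) powr (-1/p)) *\<^sub>R (emb x :: real^'n)" for x
    have embnz: "(emb x :: real^'n) \<noteq> 0" if "x \<in> Sph ?k" for x
      using emb_S[OF that k(2)] by auto
    have psiS: "psi x \<in> sphere_p p" if "x \<in> Sph ?k" for x
      unfolding psi_def by (rule normalize_p[OF p embnz[OF that]])
    have psineg: "psi (\<lambda>i. - x i) = - psi x" for x
      by (simp add: psi_def emb_neg pnorm_neg)
    have cpsi: "continuous_on (Sph ?k) psi"
    proof -
      have c1: "continuous_on (Sph ?k) (\<lambda>x. pnorm_p p (emb x :: real^'n))"
        by (rule continuous_on_compose2[OF cont_pnorm[OF p] cont_emb]) auto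
      have pn: "\<forall>x\<in>Sph ?k. pnorm_p p (emb x :: real^'n) \<noteq> 0"
      proof
        fix x assume x: "x \<in> Sph ?k"
        show "pnorm_p p (emb x :: real^'n) \<noteq> 0" using pnorm_pos[OF embnz[OF x], of p] by simp
      qed
      show ?thesis unfolding psi_def
        by (intro continuous_intros c1 cont_emb pn)
    qed
    define G where "G x = (\<lambda>i. if i < j then g (psi x) i else 0)" for x
    show False
    proof (rule BU[of ?k G, where 'n='n, OF k])
      show "continuous_on (Sph ?k) G"
        unfolding G_def
      proof (intro continuous_on_coordinatewise_then_product)
        fix i
        show "continuous_on (Sph ?k) (\<lambda>x. if i < j then g (psi x) i else 0)"
        proof (cases "i < j")
          case True
          have "continuous_on (Sph ?k) (\<lambda>x. g (psi x) i)"
            by (rule continuous_on_compose2[OF gc[OF True] cpsi]) (auto simp: psiS)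
          then show ?thesis using True by simp
        qed simp
      qed
      show "G x i = 0" if "x \<in> Sph ?k" "?k \<le> i" for x i
        using that j by (simp add: G_def)
      show "G (\<lambda>i. - x i) = (\<lambda>i. - G x i)" if "x \<in> Sph ?k" for x
        using go[OF psiS[OF that]] by (simp add: G_def psineg fun_eq_iff)
      show "\<exists>i<?k. G x i \<noteq> 0" if x: "x \<in> Sph ?k" for x
      proof -
        obtain i where "i < j" "g (psi x) i \<noteq> 0" using gn[OF psiS[OF x]] by blast
        then show ?thesis using j by (intro exI[of _ i]) (simp add: G_def)
      qed
    qed
  qed
qed

lemma sphere_in_family:
  assumes p: "0 < p" and n2: "2 \<le> CARD('n::finite)"
  shows "(sphere_p p :: (real^'n) set) \<in> genus_family p CARD('n)"
  using genus_sphere[OF assms] closed_sphere_p[OF p] sphere_p_neg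
  by (auto simp: genus_family_def symmetric_set_def)

lemma bdd_rayleigh:
  assumes sg: "signed_graph E \<sigma>" and p: "0 < p" and B: "B \<subseteq> sphere_p p"
  shows "bdd_above (rayleigh E \<sigma> p ` (B :: (real^'n::finite) set))"
proof (rule bdd_aboveI2)
  fix f assume f: "f \<in> B"
  then have fs: "f \<in> sphere_p p" using B by auto
  have T: "(if {i, j} \<in> E then \<bar>f $ i - \<sigma> {i, j} * f $ j\<bar> powr p else 0) \<le> 2 powr p" for i j
  proof (cases "{i, j} \<in> E")
    case True
    then have s: "\<bar>\<sigma> {i, j}\<bar> = 1" using sg by (auto simp: signed_graph_def)
    have "\<bar>f $ i - \<sigma> {i, j} * f $ j\<bar> \<le> \<bar>f $ i\<bar> + \<bar>\<sigma> {i, j}\<bar> * \<bar>f $ j\<bar>"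
      by (metis abs_mult abs_triangle_ineq4)
    also have "\<dots> \<le> 2" using coord_bound[OF p fs, of i] coord_bound[OF p fs, of j] s by simp
    finally have "\<bar>f $ i - \<sigma> {i, j} * f $ j\<bar> powr p \<le> 2 powr p"
      using p by (intro powr_mono2) auto
    then show ?thesis using True by simp
  qed (simp)
  have "rayleigh E \<sigma> p f = edge_energy E \<sigma> p f"
    using fs by (simp add: rayleigh_def sphere_p_def)
  also have "\<dots> \<le> (1/2) * (\<Sum>i\<in>(UNIV::'n set). \<Sum>j\<in>(UNIV::'n set). 2 powr p)"
    unfolding edge_energy_def by (intro mult_left_mono sum_mono T) auto
  finally show "rayleigh E \<sigma> p f \<le> (1/2) * (\<Sum>i\<in>(UNIV::'n set). \<Sum>j\<in>(UNIV::'n set). 2 powr p)" .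
qed

lemma lower_bound:
  fixes E :: "'n::finite set set" and \<sigma> :: "'n set \<Rightarrow> real"
  assumes sg: "signed_graph E \<sigma>" and ab: "a \<noteq> b" "{a, b} \<in> E" and p: "1 \<le> p"
  shows "2 powr (p - 1) \<le> p_eigenvalue E \<sigma> p CARD('n)"
proof -
  let ?n = "CARD('n)"
  have p0: "0 < p" using p by simp
  define s where "s = \<sigma> {a, b}"
  have s: "s = 1 \<or> s = -1" using sg ab by (auto simp: signed_graph_def s_def)
  then have ss: "s * s = 1" and as: "\<bar>s\<bar> = 1" by auto
  have n2: "2 \<le> ?n"
  proof -
    have "card {a, b} \<le> card (UNIV :: 'n set)" using card_mono[of "UNIV :: 'n set" "{a, b}"] by simp
    then show ?thesis using ab(1) by simp
  qed
  define f0 :: "real^'n" where "f0 = (\<chi> j. if j = a then 1 else if j = b then - s else 0)"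
  have f0a: "f0 $ a = 1" and f0b: "f0 $ b = - s" using ab(1) by (auto simp: f0_def)
  have pf0: "pnorm_p p f0 = 2"
  proof -
    have "\<bar>f0 $ j\<bar> powr p = (if j = a then 1 else 0) + (if j = b then 1 else 0)" for j
      using ab(1) as p0 by (auto simp: f0_def)
    then have "pnorm_p p f0 = (\<Sum>j\<in>UNIV. (if j = a then 1 else 0) + (if j = b then (1::real) else 0))"
      by (simp add: pnorm_p_def)
    also have "\<dots> = 2" by (simp add: sum.distrib)
    finally show ?thesis .
  qed
  have mult: "\<exists>x\<in>B. \<exists>c. c \<noteq> 0 \<and> x = c *\<^sub>R f0" if B: "B \<in> genus_family p ?n" for B
  proof (rule ccontr)
    assume nm: "\<not> ?thesis"
    have Bs: "B \<subseteq> sphere_p p" using B by (simp add: genus_family_def)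
    have "card (UNIV - {a}) = ?n - 1" by (simp add: card_Diff_singleton)
    then obtain d where d: "bij_betw d {..<?n - 1} (UNIV - {a})"
      using ex_bij_betw_nat_finite[of "UNIV - {a} :: 'n set"] by (auto simp: atLeast0LessThan)
    define g where "g x i = x $ d i - f0 $ d i * x $ a" for x :: "real^'n" and i
    have "odd_map_to B (?n - 1)"
      unfolding odd_map_to_def
    proof (intro exI[of _ g] conjI ballI allI impI)
      show "continuous_on B (\<lambda>x. g x i)" for i unfolding g_def by (intro continuous_intros)
      show "g (- x) i = - g x i" for x i by (simp add: g_def)
      fix x assume x: "x \<in> B"
      show "\<exists>i<?n - 1. g x i \<noteq> 0"
      proof (rule ccontr)
        assume "\<not> ?thesis"
        then have z: "\<And>i. i < ?n - 1 \<Longrightarrow> g x i = 0" by auto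
        have xe: "x = x $ a *\<^sub>R f0"
        proof (subst vec_eq_iff, rule allI)
          fix j show "x $ j = (x $ a *\<^sub>R f0) $ j"
          proof (cases "j = a")
            case True then show ?thesis by (simp add: f0a)
          next
            case False
            then have "j \<in> d ` {..<?n - 1}" using d by (simp add: bij_betw_def)
            then obtain i where "i < ?n - 1" "j = d i" by auto
            then show ?thesis using z[of i] by (simp add: g_def mult.commute)
          qed
        qed
        have "x \<noteq> 0" using x Bs sphere_p_nz by blast
        then have "x $ a \<noteq> 0" using xe by auto
        then show False using nm x xe by blast
      qed
    qed
    then have "genus B \<le> ?n - 1" by (rule genus_le)
    moreover have "?n \<le> genus B" using B by (simp add: genus_family_def)
    ultimately show False using n2 by linarith
  qed
  have rb: "2 powr (p - 1) \<le> rayleigh E \<sigma> p x" if x: "x \<in> sphere_p p" "x = c *\<^sub>R f0" for x c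
  proof -
    have "1 = pnorm_p p x" using x(1) by (simp add: sphere_p_def)
    also have "\<dots> = \<bar>c\<bar> powr p * 2" using x(2) pf0 by (simp add: pnorm_scale)
    finally have cp: "\<bar>c\<bar> powr p = 1/2" by simp
    define T where "T i j = (if {i, j} \<in> E then \<bar>x $ i - \<sigma> {i, j} * x $ j\<bar> powr p else 0)" for i j
    have T0: "0 \<le> T i j" for i j by (simp add: T_def)
    have xa: "x $ a = c" and xb: "x $ b = - c * s" using x(2) f0a f0b by auto
    have "\<bar>2 * c\<bar> powr p = 2 powr p * \<bar>c\<bar> powr p" by (simp add: abs_mult powr_mult)
    then have t2: "\<bar>2 * c\<bar> powr p = 2 powr p / 2" using cp by simp
    have Tab: "T a b = 2 powr p / 2"
    proof -
      have "x $ a - s * x $ b = 2 * c" using xa xb ss by (simp add: algebra_simps)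
      then show ?thesis using ab(2) t2 by (simp add: T_def s_def)
    qed
    have Tba: "T b a = 2 powr p / 2"
    proof -
      have ba: "{b, a} = {a, b}" by auto
      have "\<bar>x $ b - s * x $ a\<bar> = \<bar>2 * c\<bar>"
        using xa xb as by (simp add: abs_mult algebra_simps)
      then show ?thesis using ab(2) t2 by (simp add: T_def s_def ba)
    qed
    have "T a b + T b a \<le> (\<Sum>j\<in>UNIV. T a j) + (\<Sum>j\<in>UNIV. T b j)"
      by (intro add_mono member_le_sum) (auto simp: T0)
    also have "\<dots> = (\<Sum>i\<in>{a, b}. \<Sum>j\<in>UNIV. T i j)" using ab(1) by simp
    also have "\<dots> \<le> (\<Sum>i\<in>UNIV. \<Sum>j\<in>UNIV. T i j)"
      by (rule sum_mono2) (auto intro: sum_nonneg T0)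
    finally have "2 powr p \<le> (\<Sum>i\<in>UNIV. \<Sum>j\<in>UNIV. T i j)" using Tab Tba by simp
    then have "2 powr p / 2 \<le> edge_energy E \<sigma> p x"
      by (simp add: edge_energy_def T_def)
    moreover have "2 powr (p - 1) = 2 powr p / 2" by (simp add: powr_diff)
    moreover have "rayleigh E \<sigma> p x = edge_energy E \<sigma> p x"
      using x(1) by (simp add: rayleigh_def sphere_p_def)
    ultimately show ?thesis by simp
  qed
  have supB: "2 powr (p - 1) \<le> (SUP f\<in>B. rayleigh E \<sigma> p f)" if B: "B \<in> genus_family p ?n" for B
  proof -
    have Bs: "B \<subseteq> sphere_p p" using B by (simp add: genus_family_def)
    obtain x c where x: "x \<in> B" "x = c *\<^sub>R f0" using mult[OF B] by blast
    have xs: "x \<in> sphere_p p" using x(1) Bs by blast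
    have "2 powr (p - 1) \<le> rayleigh E \<sigma> p x" by (rule rb[OF xs x(2)])
    then show ?thesis by (rule cSUP_upper2[OF bdd_rayleigh[OF sg p0 Bs] x(1)])
  qed
  have sf: "(sphere_p p :: (real^'n) set) \<in> genus_family p ?n" by (rule sphere_in_family[OF p0 n2])
  have ne: "(genus_family p ?n :: (real^'n) set set) \<noteq> {}"
  proof
    assume "(genus_family p ?n :: (real^'n) set set) = {}"
    with sf show False by simp
  qed
  show ?thesis unfolding p_eigenvalue_def
    by (rule cINF_greatest[OF ne supB])
qed

lemma eigen_empty:
  fixes \<sigma> :: "'n::finite set \<Rightarrow> real"
  assumes k: "1 \<le> k"
  shows "p_eigenvalue {} \<sigma> p k = (if genus_family p k = ({} :: (real^'n) set set) then Inf {} else 0)"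
proof -
  have ne: "B \<noteq> {}" if "B \<in> (genus_family p k :: (real^'n) set set)" for B
  proof
    assume "B = {}"
    then have "genus B \<le> 0" using genus_le[OF odd_map_empty] by simp
    then show False using that k by (simp add: genus_family_def)
  qed
  have "(\<lambda>B::(real^'n) set. SUP f\<in>B. rayleigh {} \<sigma> p f) ` (genus_family p k :: (real^'n) set set)
      = (\<lambda>B. 0) ` (genus_family p k :: (real^'n) set set)"
  proof -
    have pt: "(SUP f\<in>B. rayleigh {} \<sigma> p f) = 0" if "B \<in> (genus_family p k :: (real^'n) set set)" for B
      using ne[OF that] by (simp add: rayleigh_def edge_energy_def cSUP_const)
    show ?thesis by (rule image_cong[OF refl]) (rule pt)
  qed
  then have "p_eigenvalue {} \<sigma> p k = (INF B\<in>(genus_family p k :: (real^'n) set set). (0::real))"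
    unfolding p_eigenvalue_def by simp
  also have "\<dots> = (if genus_family p k = ({} :: (real^'n) set set) then Inf {} else 0)"
    by (simp add: cINF_const)
  finally show ?thesis .
qed

theorem theorem8p3:
  fixes E :: "'n::finite set set" and \<sigma> :: "'n set \<Rightarrow> real"
  assumes "signed_graph E \<sigma>"
  shows "(\<forall>k\<in>{1..CARD('n)}.
            ((\<lambda>p::real. 2 powr (-p) * p_eigenvalue E \<sigma> p k) \<longlongrightarrow> 0) at_top)
         \<longleftrightarrow> E = {}"
proof
  assume lim: "\<forall>k\<in>{1..CARD('n)}. ((\<lambda>p::real. 2 powr (-p) * p_eigenvalue E \<sigma> p k) \<longlongrightarrow> 0) at_top"
  show "E = {}"
  proof (rule ccontr)
    assume "E \<noteq> {}"
    then obtain e where "e \<in> E" by blast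
    then obtain a b where ab: "a \<noteq> b" "{a, b} \<in> E" using assms by (auto simp: signed_graph_def)
    have n1: "CARD('n) \<in> {1..CARD('n)}" by simp
    have L: "((\<lambda>p::real. 2 powr (-p) * p_eigenvalue E \<sigma> p CARD('n)) \<longlongrightarrow> 0) at_top"
      using lim n1 by blast
    have ev1: "eventually (\<lambda>p::real. 2 powr (-p) * p_eigenvalue E \<sigma> p CARD('n) < 1/2) at_top"
      using order_tendstoD(2)[OF L, of "1/2"] by simp
    have ev2: "eventually (\<lambda>p::real. 1/2 \<le> 2 powr (-p) * p_eigenvalue E \<sigma> p CARD('n)) at_top"
    proof (rule eventually_mono[OF eventually_ge_at_top[of 1]])
      fix p :: real assume p: "1 \<le> p"
      have "2 powr (-p) * 2 powr (p - 1) \<le> 2 powr (-p) * p_eigenvalue E \<sigma> p CARD('n)"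
        by (rule mult_left_mono[OF lower_bound[OF assms ab p]]) simp
      moreover have "2 powr (-p) * 2 powr (p - 1) = (1/2::real)"
      proof -
        have "2 powr (-p) * 2 powr (p - 1) = 2 powr (-p + (p - 1))" by (rule powr_add[symmetric])
        also have "\<dots> = 2 powr (-1)" by simp
        also have "\<dots> = 1/2" by (simp add: powr_minus)
        finally show ?thesis .
      qed
      ultimately show "1/2 \<le> 2 powr (-p) * p_eigenvalue E \<sigma> p CARD('n)" by simp
    qed
    have "eventually (\<lambda>p::real. False) at_top"
      using eventually_conj[OF ev1 ev2] by (rule eventually_mono) (erule conjE, linarith)
    then show False by simp
  qed
next
  assume E: "E = {}"
  show "\<forall>k\<in>{1..CARD('n)}. ((\<lambda>p::real. 2 powr (-p) * p_eigenvalue E \<sigma> p k) \<longlongrightarrow> 0) at_top"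
  proof
    fix k assume k: "k \<in> {1..CARD('n)}"
    define C where "C = \<bar>Inf {} :: real\<bar>"
    have bnd: "norm (2 powr (-p) * p_eigenvalue E \<sigma> p k) \<le> 2 powr (-p) * C" for p :: real
      using k by (simp add: E eigen_empty abs_mult C_def)
    show "((\<lambda>p::real. 2 powr (-p) * p_eigenvalue E \<sigma> p k) \<longlongrightarrow> 0) at_top"
      by (rule Lim_null_comparison[OF always_eventually[OF allI[OF bnd]]])
        (use tendsto_mult[OF two_powr_neg tendsto_const[of C]] in simp)
  qed
qed

end
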